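(* Let $\mathbb{F}$ be a field and $\mathcal{A}$ a znz-pattern with $m\ge2$ nonzero diagonal entries, such that the digraph $D(\mathcal{A})$ has no $k$-cycles with $2\le k\le m-1$. If $\mathcal{A}$ is potentially nilpotent over $\mathbb{F}$, then $\mathbb{F}$ contains all the $m$-th roots of unity, i.e. $x^m-1$ factors into $m$ linear factors over $\mathbb{F}$.
   Context: A znz-pattern is an $n\times n$ matrix with entries in $\{*,0\}$; a realization over $\mathbb{F}$ is a matrix in $M_n(\mathbb{F})$ whose nonzero entries are exactly at the $*$ positions; $\mathcal{A}$ is potentially nilpotent over $\mathbb{F}$ if some realization is nilpotent. The digraph $D(\mathcal{A})$ has vertex set $\{1,\ldots,n\}$ and an arc $(i,j)$ whenever $\mathcal{A}_{i,j}=*$ (arcs $(i,i)$ are loops). A $k$-cycle is a sequence of $k$ distinct vertices $i_1,\ldots,i_k$ with arcs $(i_1,i_2),\ldots,(i_{k-1},i_k),(i_k,i_1)$. *)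

theory Defs
  imports "HOL-Analysis.Analysis" "HOL-Computational_Algebra.Polynomial"
begin

(* A znz-pattern on index type 'n: P i j = True iff entry (i,j) is *. *)
type_synonym 'n znz_pattern = "'n \<Rightarrow> 'n \<Rightarrow> bool"

primrec mat_power :: "'a::semiring_1 ^('n::finite)^'n \<Rightarrow> nat \<Rightarrow> 'a^'n^'n" where
  "mat_power A 0 = mat 1"
| "mat_power A (Suc k) = A ** mat_power A k"

definition nilpotent_mat :: "'a::semiring_1 ^('n::finite)^'n \<Rightarrow> bool" where
  "nilpotent_mat A \<longleftrightarrow> (\<exists>k. mat_power A k = 0)"

definition realization :: "('n::finite) znz_pattern \<Rightarrow> 'a::zero ^'n^'n \<Rightarrow> bool" where
  "realization P A \<longleftrightarrow> (\<forall>i j. A $ i $ j \<noteq> 0 \<longleftrightarrow> P i j)"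

definition potentially_nilpotent :: "('n::finite) znz_pattern \<Rightarrow> ('a::field) itself \<Rightarrow> bool" where
  "potentially_nilpotent P (_ :: 'a itself) \<longleftrightarrow>
     (\<exists>A :: 'a^'n^'n. realization P A \<and> nilpotent_mat A)"

definition has_cycle :: "'n znz_pattern \<Rightarrow> nat \<Rightarrow> bool" where
  "has_cycle P k \<longleftrightarrow> (\<exists>v :: nat \<Rightarrow> 'n. inj_on v {..<k} \<and>
       (\<forall>i<k. P (v i) (v (Suc i mod k))))"

definition num_diag :: "('n::finite) znz_pattern \<Rightarrow> nat" where
  "num_diag P = card {i. P i i}"

end

theory Submission
  imports Defs
begin

lemma perm_period:
  fixes \<sigma> :: "'n::finite \<Rightarrow> 'n"
  assumes "inj \<sigma>"
  shows "\<exists>k>0. (\<sigma>^^k) i0 = i0"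
proof -
  let ?f = "\<lambda>k. (\<sigma>^^k) i0"
  have "card ((?f) ` {..CARD('n)}) \<le> CARD('n)" by (rule card_mono) auto
  hence "\<not> inj_on ?f {..CARD('n)}" using pigeonhole[of ?f "{..CARD('n)}"] by simp
  then obtain a b where ab: "a \<le> CARD('n)" "b \<le> CARD('n)" "a \<noteq> b" "?f a = ?f b"
    unfolding inj_on_def by auto
  { fix a b assume "a < b" "?f a = ?f b"
    hence "(\<sigma>^^a) ((\<sigma>^^(b-a)) i0) = (\<sigma>^^a) i0"
      by (metis funpow_add comp_apply le_add_diff_inverse less_imp_le)
    hence "(\<sigma>^^(b-a)) i0 = i0" using inj_fn[OF assms, of a] by (auto dest: injD)
    hence "\<exists>k>0. (\<sigma>^^k) i0 = i0" using \<open>a<b\<close> by (intro exI[of _ "b-a"]) auto }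
  with ab show ?thesis by (metis linorder_neqE_nat)
qed

lemma cycle_big:
  fixes \<sigma> :: "'n::finite \<Rightarrow> 'n"
  assumes perm: "\<sigma> permutes UNIV" and mv: "\<sigma> i0 \<noteq> i0"
    and arcs: "\<forall>i. \<sigma> i \<noteq> i \<longrightarrow> Q i (\<sigma> i)"
    and nc: "\<forall>k. 2\<le>k \<and> k \<le> m-1 \<longrightarrow> \<not> has_cycle Q k" and m2: "m \<ge> 2"
  shows "m \<le> card {i. \<sigma> i \<noteq> i}"
proof -
  have inj: "inj \<sigma>" using perm by (rule permutes_inj)
  define L where "L = (LEAST k. 0 < k \<and> (\<sigma>^^k) i0 = i0)"
  have ex: "\<exists>k. 0 < k \<and> (\<sigma>^^k) i0 = i0" using perm_period[OF inj] by blast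
  have L: "0 < L" "(\<sigma>^^L) i0 = i0" using LeastI_ex[OF ex] unfolding L_def by auto
  have Lmin: "\<And>k. 0 < k \<Longrightarrow> k < L \<Longrightarrow> (\<sigma>^^k) i0 \<noteq> i0"
    unfolding L_def using not_less_Least by blast
  define v where "v j = (\<sigma>^^j) i0" for j
  have injv: "inj_on v {..<L}"
  proof (rule inj_onI)
    fix a b assume a: "a \<in> {..<L}" and b: "b \<in> {..<L}" and e: "v a = v b"
    { fix a b assume "a < b" "b < L" "v a = v b"
      hence "(\<sigma>^^a) ((\<sigma>^^(b-a)) i0) = (\<sigma>^^a) i0" unfolding v_def
        by (metis funpow_add comp_apply le_add_diff_inverse less_imp_le)
      hence "(\<sigma>^^(b-a)) i0 = i0" using inj_fn[OF inj, of a] by (auto dest: injD)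
      with Lmin[of "b-a"] \<open>a<b\<close> \<open>b<L\<close> have False by linarith }
    with a b e show "a = b" by (metis lessThan_iff linorder_neqE_nat)
  qed
  have moved: "\<sigma> (v j) \<noteq> v j" for j
  proof
    assume "\<sigma> (v j) = v j"
    hence "(\<sigma>^^j) (\<sigma> i0) = (\<sigma>^^j) i0" unfolding v_def
      by (metis comp_apply funpow_Suc_right funpow_swap1)
    hence "\<sigma> i0 = i0" using inj_fn[OF inj, of j] by (auto dest: injD)
    with mv show False by simp
  qed
  have step: "v (Suc j mod L) = \<sigma> (v j)" if "j < L" for j
  proof (cases "Suc j < L")
    case True thus ?thesis by (simp add: v_def)
  next
    case False
    hence "Suc j = L" using that by simp
    thus ?thesis using L(2) by (simp add: v_def) (metis funpow.simps(2) comp_apply)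
  qed
  have L1: "L \<noteq> 1" using L mv by auto
  have cyc: "has_cycle Q L"
    unfolding has_cycle_def
    by (rule exI[of _ v]) (use injv step arcs moved in auto)
  have "\<not> (L \<le> m - 1)" using nc cyc L L1 by auto
  hence "m \<le> L" by simp
  also have "L = card (v ` {..<L})" using injv by (simp add: card_image)
  also have "\<dots> \<le> card {i. \<sigma> i \<noteq> i}" by (rule card_mono) (use moved in auto)
  finally show ?thesis .
qed


lemma matrix_sub_rdistrib:
  fixes A B C :: "'a::comm_ring_1^'n::finite^'n"
  shows "(A - B) ** C = A ** C - B ** C"
  by (simp add: matrix_matrix_mult_def vec_eq_iff sum_subtractf left_diff_distrib)

lemma geom_mat:
  fixes M :: "'a::comm_ring_1^'n::finite^'n"
  shows "(mat 1 - M) ** (\<Sum>j<k. mat_power M j) = mat 1 - mat_power M k"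
proof (induction k)
  case 0 thus ?case by simp
next
  case (Suc k)
  have "(mat 1 - M) ** (\<Sum>j<Suc k. mat_power M j)
     = (mat 1 - M) ** (\<Sum>j<k. mat_power M j) + (mat 1 - M) ** mat_power M k"
    by (simp add: matrix_add_ldistrib)
  also have "\<dots> = mat 1 - mat_power M (Suc k)"
    using Suc by (simp add: matrix_sub_rdistrib)
  finally show ?case .
qed

definition tmat :: "'a::field^'n::finite^'n \<Rightarrow> 'a poly^'n^'n" where
  "tmat A = (\<chi> i j. monom (A$i$j) 1)"

lemma tmat_power: "mat_power (tmat A) k = (\<chi> i j. monom (mat_power A k $i$j) k)"
proof (induction k)
  case 0 thus ?case by (simp add: mat_def vec_eq_iff)
next
  case (Suc k)
  show ?case
    by (simp only: mat_power.simps Suc.IH)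
       (simp add: tmat_def matrix_matrix_mult_def vec_eq_iff mult_monom monom_sum)
qed

lemma det_unit:
  fixes A :: "'a::field^'n::finite^'n"
  assumes "nilpotent_mat A"
  shows "is_unit (det (mat 1 - tmat A))"
proof -
  obtain k where k: "mat_power A k = 0" using assms nilpotent_mat_def by blast
  have "mat_power (tmat A) k = 0" using k by (simp add: tmat_power vec_eq_iff)
  hence "(mat 1 - tmat A) ** (\<Sum>j<k. mat_power (tmat A) j) = mat 1" by (simp add: geom_mat)
  hence "det (mat 1 - tmat A) * det (\<Sum>j<k. mat_power (tmat A) j) = 1"
    by (metis det_mul det_I)
  thus ?thesis by (metis dvdI)
qed


lemma B_entry: "(mat 1 - tmat A) $ i $ j = (if i = j then 1 else 0) - monom (A$i$j) 1"
  by (simp add: tmat_def mat_def)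

lemma term_dvd:
  fixes A :: "'a::field^'n::finite^'n"
  assumes real: "realization P A" and nc: "\<forall>k. 2\<le>k \<and> k \<le> m-1 \<longrightarrow> \<not> has_cycle P k"
    and m2: "m \<ge> 2" and perm: "\<sigma> permutes UNIV" and nid: "\<sigma> \<noteq> id"
  shows "[:0,1:]^m dvd (\<Prod>i\<in>UNIV. (mat 1 - tmat A)$i$(\<sigma> i))"
proof (cases "\<exists>i. \<sigma> i \<noteq> i \<and> A$i$(\<sigma> i) = 0")
  case True
  then obtain i where "\<sigma> i \<noteq> i" "A$i$(\<sigma> i) = 0" by blast
  hence z: "(mat 1 - tmat A)$i$(\<sigma> i) = 0" by (simp add: tmat_def mat_def)
  have "(\<Prod>i\<in>UNIV. (mat 1 - tmat A)$i$(\<sigma> i)) = 0" by (rule prod_zero) (use z in auto)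
  thus ?thesis by (metis dvd_0_right)
next
  case False
  obtain i0 where i0: "\<sigma> i0 \<noteq> i0" using nid by (auto simp: fun_eq_iff)
  have arcs: "\<forall>i. \<sigma> i \<noteq> i \<longrightarrow> P i (\<sigma> i)" using False real unfolding realization_def by blast
  have mM: "m \<le> card {i. \<sigma> i \<noteq> i}" by (rule cycle_big[OF perm i0 arcs nc m2])
  have "[:0,1:]^m dvd [:0,1::'a:]^card {i. \<sigma> i \<noteq> i}" using mM by (rule le_imp_power_dvd)
  also have "[:0,1::'a:]^card {i. \<sigma> i \<noteq> i} = (\<Prod>i\<in>{i. \<sigma> i \<noteq> i}. [:0,1:])" by simp
  also have "\<dots> dvd (\<Prod>i\<in>{i. \<sigma> i \<noteq> i}. (mat 1 - tmat A)$i$(\<sigma> i))"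
  proof (rule prod_dvd_prod)
    fix i assume "i \<in> {i. \<sigma> i \<noteq> i}"
    hence "(mat 1 - tmat A)$i$(\<sigma> i) = [:0,1:] * [:-(A$i$(\<sigma> i)):]"
      by (simp add: tmat_def mat_def monom_Suc monom_0)
    thus "[:0,1:] dvd (mat 1 - tmat A)$i$(\<sigma> i)" by (metis dvd_triv_left)
  qed
  also have "\<dots> dvd (\<Prod>i\<in>UNIV. (mat 1 - tmat A)$i$(\<sigma> i))"
    by (rule prod_dvd_prod_subset) auto
  finally show ?thesis .
qed

lemma det_congr:
  fixes A :: "'a::field^'n::finite^'n"
  assumes real: "realization P A" and nc: "\<forall>k. 2\<le>k \<and> k \<le> m-1 \<longrightarrow> \<not> has_cycle P k"
    and m2: "m \<ge> 2"
  shows "[:0,1:]^m dvd det (mat 1 - tmat A) - (\<Prod>i\<in>UNIV. (mat 1 - tmat A)$i$i)"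
proof -
  let ?B = "mat 1 - tmat A"
  let ?t = "\<lambda>p. of_int (sign p) * (\<Prod>i\<in>UNIV. ?B$i$p i)"
  have fin: "finite {p. p permutes (UNIV::'n set)}" by (simp add: finite_permutations)
  have "det ?B = ?t id + sum ?t ({p. p permutes UNIV} - {id})"
    unfolding det_def by (subst sum.remove[OF fin, of id]) auto
  hence "det ?B - (\<Prod>i\<in>UNIV. ?B$i$i) = sum ?t ({p. p permutes UNIV} - {id})" by simp
  also have "[:0,1:]^m dvd \<dots>"
    by (rule dvd_sum) (use term_dvd[OF real nc m2] in auto)
  finally show ?thesis .
qed


lemma pcompose_power_left: "pcompose (p ^ n) q = (pcompose p q) ^ n"
  by (induction n) (simp_all add: pcompose_mult pcompose_1)

lemma final_alg:
  fixes g :: "'a::field poly" and d :: "'n::finite \<Rightarrow> 'a"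
  assumes g: "g = (\<Prod>i\<in>UNIV. [:1, - d i:])"
    and gc: "g = 1 - smult c ([:0,1:]^m)"
    and L: "L = {i. d i \<noteq> 0}" "card L = m" "m \<ge> 1"
    and i0: "i0 \<in> L"
  shows "(\<Prod>i\<in>L. [:-(d i0 / d i), 1:]) = monom 1 m - 1"
proof -
  define d0 where "d0 = d i0"
  have d0: "d0 \<noteq> 0" using i0 L by (simp add: d0_def)
  have "poly g (1/d0) = 0" unfolding g poly_prod
    by (rule prod_zero) (use d0 in \<open>auto intro!: bexI[of _ i0] simp: d0_def\<close>)
  hence "1 - c * (1/d0)^m = 0" using gc by simp
  hence c: "c * (1/d0)^m = 1" by simp
  have "pcompose g [:0, 1/d0:] = 1 - smult c ([:0, 1/d0:]^m)"
    using gc by (simp add: pcompose_diff pcompose_smult pcompose_power_left pcompose_pCons pcompose_1)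
  also have "[:0, 1/d0:]^m = smult ((1/d0)^m) ([:0,1:]^m)"
    using smult_power[of "1/d0" "[:0,1:]" m] by simp
  also have "1 - smult c (smult ((1/d0)^m) ([:0,1:]^m)) = 1 - [:0,1::'a:]^m"
    by (simp only: smult_smult c smult_1_left)
  finally have pg: "pcompose g [:0, 1/d0:] = 1 - [:0,1:]^m" .
  have "pcompose g [:0, 1/d0:] = (\<Prod>i\<in>UNIV. [:1, - d i / d0:])"
    unfolding g pcompose_prod by (simp add: pcompose_pCons)
  also have "\<dots> = (\<Prod>i\<in>L. [:1, - d i / d0:])"
    by (rule prod.mono_neutral_right) (auto simp: L one_pCons)
  finally have pg2: "(\<Prod>i\<in>L. [:1, - d i / d0:]) = 1 - [:0,1:]^m" using pg by simp
  define K where "K = (\<Prod>i\<in>L. -(d0 / d i))"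
  have fac: "[:-(d0 / d i), 1:] = [:-(d0 / d i):] * [:1, - d i / d0:]" if "i \<in> L" for i
    using that d0 L by (simp add: field_simps)
  have Q: "(\<Prod>i\<in>L. [:-(d0 / d i), 1:]) = [:K:] * (1 - [:0,1:]^m)"
    unfolding K_def prod_to_poly[symmetric] pg2[symmetric] prod.distrib[symmetric]
    by (rule prod.cong) (use fac in auto)
  have fin: "finite L" using L by (metis card_ge_0_finite not_one_le_zero zero_less_iff_neq_zero)
  have "degree (\<Prod>i\<in>L. [:-(d0 / d i), 1:]) = m"
    by (subst degree_prod_sum_eq) (auto simp: L(2))
  moreover have "lead_coeff (\<Prod>i\<in>L. [:-(d0 / d i), 1:]) = 1"
    by (simp add: lead_coeff_prod)
  ultimately have "coeff (\<Prod>i\<in>L. [:-(d0 / d i), 1:]) m = 1" by simp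
  hence "K * (coeff 1 m - 1) = 1" unfolding Q using L(3) by (simp add: monom_altdef[of 1, simplified, symmetric]) 
  hence "-K = 1" using L(3) by simp
  hence K: "K = -1" by (metis minus_minus)
  show ?thesis unfolding d0_def[symmetric] Q K by (simp add: monom_altdef)
qed


theorem theorem4p4:
  fixes P :: "('n::finite) znz_pattern" and m :: nat
  assumes "num_diag P = m" and "m \<ge> 2"
    and "\<forall>k. 2 \<le> k \<and> k \<le> m - 1 \<longrightarrow> \<not> has_cycle P k"
    and "potentially_nilpotent P TYPE('a::field)"
  shows "\<exists>rs :: 'a list. length rs = m \<and>
           (monom 1 m - 1 :: 'a poly) = (\<Prod>r\<leftarrow>rs. [:- r, 1:])"
proof -
  obtain A :: "'a^'n^'n" where real: "realization P A" and nil: "nilpotent_mat A"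
    using assms(4) unfolding potentially_nilpotent_def by blast
  define B where "B = mat 1 - tmat A"
  define d where "d i = A$i$i" for i
  define g where "g = (\<Prod>i\<in>UNIV. [:1, - d i:])"
  define L where "L = {i. d i \<noteq> 0}"
  have LP: "L = {i. P i i}" using real unfolding L_def d_def realization_def by blast
  have cardL: "card L = m" using assms(1) LP unfolding num_diag_def by simp
  have hB: "B$i$i = [:1, - d i:]" for i
    by (simp add: B_def tmat_def mat_def d_def monom_Suc monom_0 one_pCons)
  have dv: "[:0,1:]^m dvd det B - g"
    using det_congr[OF real assms(3) assms(2)] unfolding B_def[symmetric] g_def hB .
  then obtain q where q: "det B - g = [:0,1:]^m * q" by (elim dvdE)
  have unit: "is_unit (det B)" unfolding B_def by (rule det_unit[OF nil])
  hence D0: "det B \<noteq> 0" by auto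
  hence degD: "degree (det B) = 0" using unit is_unit_iff_degree by blast
  have "poly (det B - g) 0 = 0" unfolding q using assms(2) by simp
  moreover have "poly g 0 = 1" unfolding g_def poly_prod by simp
  ultimately have "coeff (det B) 0 = 1" by (simp add: poly_0_coeff_0)
  hence D1: "det B = 1" using degD by (metis degree_0_id one_pCons)
  have degg: "degree g \<le> m"
  proof -
    have "degree g \<le> sum (degree \<circ> (\<lambda>i. [:1, - d i:])) UNIV"
      unfolding g_def by (rule degree_prod_sum_le) simp
    also have "\<dots> = (\<Sum>i\<in>UNIV. if d i = 0 then 0 else 1)"
      by (rule sum.cong) auto
    also have "\<dots> = card L" unfolding L_def
      by (simp add: sum.If_cases) (simp add: Compl_eq)
    finally show ?thesis using cardL by simp
  qed
  have q1: "1 - g = [:0,1:]^m * q" using q D1 by simp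
  obtain c where qc: "q = [:c:]"
  proof (cases "q = 0")
    case True thus ?thesis using that[of 0] by simp
  next
    case False
    have "degree (1 - g) \<le> m" using degg
      by (metis degree_diff_le degree_1 le0)
    hence "m + degree q \<le> m" unfolding q1 using False by (simp add: degree_mult_eq degree_linear_power)
    hence "degree q = 0" by simp
    thus ?thesis using that by (metis degree_0_id)
  qed
  have gc: "g = 1 - smult c ([:0,1:]^m)" using q1 qc by (simp add: algebra_simps)
  obtain i0 where i0: "i0 \<in> L" using cardL assms(2) by (metis card.empty equals0I not_numeral_le_zero)
  have fin: "(\<Prod>i\<in>L. [:-(d i0 / d i), 1:]) = monom 1 m - 1"
    by (rule final_alg[OF g_def gc L_def cardL _ i0]) (use assms(2) in simp)
  obtain xs where xs: "distinct xs" "set xs = L" using finite_distinct_list[of L] by auto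
  show ?thesis
  proof (intro exI conjI)
    show "length (map (\<lambda>i. d i0 / d i) xs) = m" using xs cardL distinct_card by fastforce
    show "(monom 1 m - 1 :: 'a poly) = (\<Prod>r\<leftarrow>map (\<lambda>i. d i0 / d i) xs. [:- r, 1:])"
      using fin xs by (simp add: prod.distinct_set_conv_list[symmetric] comp_def)
  qed
qed

end
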